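(* Fix $n\ge3$ and $M>0$ satisfying (A) and (B), and consider the environments $\Gamma^\epsilon$. Then for all sufficiently small $\epsilon>0$, the unanimity rule $f^{(n)}$ maximizes $W^\epsilon(f)$ among all SCFs $f:V^n\to[0,1]$ that are ordinal and anonymous.
   Context: Fix $n\ge 3$ agents $N=\{1,\dots,n\}$, choosing between Reform $R$ (agent $i$'s utility $v_i$) and Status quo $S$ (utility $0$). Let $M>0$ satisfy (A): $\frac{2}{n}\left[-M^2+M+n-2\right]+\frac{n-2}{n}\left[2M+n-4\right]<0$, and (B): $2M-(n-2)>0$. Let $V=\{-M^2,-1,1,M\}$. For $\epsilon\in[0,1/4]$, the environment $\Gamma^\epsilon$ has independent values $\tilde v_1,\dots,\tilde v_n$ with distributions: for agents $1,2$ ("high-stakes"): $\Pr(-M^2)=0.5-\epsilon$, $\Pr(-1)=\epsilon$, $\Pr(1)=\epsilon$, $\Pr(M)=0.5-\epsilon$; for agents $3,\dots,n$ ("low-stakes"): $\Pr(-M^2)=\epsilon$, $\Pr(-1)=0.5-\epsilon$, $\Pr(1)=0.5-\epsilon$, $\Pr(M)=\epsilon$. An SCF is any $f:V^n\to[0,1]$ (probability of choosing $R$). $f$ is anonymous if $f(v)=f(\pi v)$ for every $v\in V^n$ and every permutation $\pi$ of $N$, where $\pi v=(v_{\pi(1)},\dots,v_{\pi(n)})$. For $v\in V^n$ let $\chi(v)=\{i:v_i>0\}$; $f$ is ordinal if $f(v)=f(v')$ whenever $\chi(v)=\chi(v')$. The unanimity rule is $f^{(n)}(v)=1$ if $|\chi(v)|=n$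 and $0$ otherwise. The welfare of $f$ in $\Gamma^\epsilon$ is $W^\epsilon(f)=\mathbb{E}^\epsilon\big(f(\tilde v)\sum_i\tilde v_i\big)$, expectation under the distributions of $\Gamma^\epsilon$. *)

theory Defs
  imports "HOL-Combinatorics.Permutations" Complex_Main
begin

text \<open>Agents are indexed by 0,...,n-1; agents 0 and 1 are the high-stakes agents
(agents 1 and 2 of the paper). A profile is an element of PiE {..<n} (\<lambda>_. V).\<close>

definition Vset :: "real \<Rightarrow> real set" where
  "Vset M = {-(M^2), -1, 1, M}"

definition profiles :: "nat \<Rightarrow> real \<Rightarrow> (nat \<Rightarrow> real) set" where
  "profiles n M = PiE {..<n} (\<lambda>_. Vset M)"

definition pval :: "real \<Rightarrow> real \<Rightarrow> nat \<Rightarrow> real \<Rightarrow> real" where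
  "pval M eps i x =
     (if i < 2 then
        (if x = -(M^2) then 0.5 - eps else if x = -1 then eps
         else if x = 1 then eps else if x = M then 0.5 - eps else 0)
      else
        (if x = -(M^2) then eps else if x = -1 then 0.5 - eps
         else if x = 1 then 0.5 - eps else if x = M then eps else 0))"

definition welfare :: "nat \<Rightarrow> real \<Rightarrow> real \<Rightarrow> ((nat \<Rightarrow> real) \<Rightarrow> real) \<Rightarrow> real" where
  "welfare n M eps f =
     (\<Sum>v\<in>profiles n M. (\<Prod>i<n. pval M eps i (v i)) * (f v * (\<Sum>i<n. v i)))"

definition is_scf :: "nat \<Rightarrow> real \<Rightarrow> ((nat \<Rightarrow> real) \<Rightarrow> real) \<Rightarrow> bool" where
  "is_scf n M f \<longleftrightarrow> (\<forall>v\<in>profiles n M. 0 \<le> f v \<and> f v \<le> 1)"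

definition anonymous :: "nat \<Rightarrow> real \<Rightarrow> ((nat \<Rightarrow> real) \<Rightarrow> real) \<Rightarrow> bool" where
  "anonymous n M f \<longleftrightarrow>
     (\<forall>v\<in>profiles n M. \<forall>\<pi>. \<pi> permutes {..<n} \<longrightarrow> f v = f (v \<circ> \<pi>))"

definition chi :: "nat \<Rightarrow> (nat \<Rightarrow> real) \<Rightarrow> nat set" where
  "chi n v = {i. i < n \<and> v i > 0}"

definition ordinal :: "nat \<Rightarrow> real \<Rightarrow> ((nat \<Rightarrow> real) \<Rightarrow> real) \<Rightarrow> bool" where
  "ordinal n M f \<longleftrightarrow>
     (\<forall>v\<in>profiles n M. \<forall>w\<in>profiles n M. chi n v = chi n w \<longrightarrow> f v = f w)"

definition unanimity :: "nat \<Rightarrow> (nat \<Rightarrow> real) \<Rightarrow> real" where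
  "unanimity n v = (if card (chi n v) = n then 1 else 0)"

end

theory Submission
  imports Defs
begin

lemma perm_exists:
  assumes "finite U" "A \<subseteq> U" "B \<subseteq> U" "card A = card B"
  shows "\<exists>p. p permutes U \<and> (\<forall>x\<in>U. p x \<in> B \<longleftrightarrow> x \<in> A)"
proof -
  have fA: "finite A" "finite B" using assms finite_subset by auto
  obtain g where g: "bij_betw g A B" using finite_same_card_bij[OF fA] assms(4) by blast
  have "card (U - A) = card (U - B)" using assms fA by (simp add: card_Diff_subset)
  then obtain h where h: "bij_betw h (U - A) (U - B)"
    using finite_same_card_bij assms(1) by (meson finite_Diff)
  define p where "p x = (if x \<in> A then g x else if x \<in> U then h x else x)" for x
  have "bij_betw p A B" using g by (rule bij_betw_cong[THEN iffD1, rotated]) (auto simp: p_def)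
  moreover have "bij_betw p (U - A) (U - B)" using h
    by (rule bij_betw_cong[THEN iffD1, rotated]) (auto simp: p_def)
  ultimately have "bij_betw p (A \<union> (U - A)) (B \<union> (U - B))"
    by (rule bij_betw_combine) auto
  moreover have "A \<union> (U - A) = U" "B \<union> (U - B) = U" using assms by auto
  ultimately have bij: "bij_betw p U U" by simp
  have "p permutes U" unfolding permutes_altdef using bij assms(2) by (auto simp: p_def)
  moreover have "\<forall>x\<in>U. p x \<in> B \<longleftrightarrow> x \<in> A"
    using g h by (auto simp: p_def bij_betw_def)
  ultimately show ?thesis by blast
qed

lemma class_const:
  assumes ord: "ordinal n M f" and an: "anonymous n M f"
    and v: "v \<in> profiles n M" and w: "w \<in> profiles n M"
    and c: "card (chi n v) = card (chi n w)"
  shows "f v = f w"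
proof -
  have sub: "chi n w \<subseteq> {..<n}" "chi n v \<subseteq> {..<n}" by (auto simp: chi_def)
  obtain p where p: "p permutes {..<n}" and pp: "\<forall>x\<in>{..<n}. p x \<in> chi n v \<longleftrightarrow> x \<in> chi n w"
    using perm_exists[OF _ sub] c by auto
  have pin: "p i < n" if "i < n" for i using p that by (meson lessThan_iff permutes_in_image)
  have "f v = f (v \<circ> p)" using an v p unfolding anonymous_def by blast
  moreover have "v \<circ> p \<in> profiles n M"
    using v p pin unfolding profiles_def
    by (auto simp: PiE_def Pi_def extensional_def permutes_not_in)
  moreover have "chi n (v \<circ> p) = chi n w"
    using pp pin by (auto simp: chi_def)
  ultimately show ?thesis using ord w unfolding ordinal_def by metis
qed

definition aa :: "real \<Rightarrow> nat \<Rightarrow> real" where "aa M i = (if i < 2 then M else 1)"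
definition bb :: "real \<Rightarrow> nat \<Rightarrow> real" where "bb M i = (if i < 2 then M^2 else 1)"
definition vS :: "nat \<Rightarrow> real \<Rightarrow> nat set \<Rightarrow> nat \<Rightarrow> real" where
  "vS n M S = (\<lambda>i. if i < n then (if i \<in> S then aa M i else - bb M i) else undefined)"

lemma finite_profiles: "finite (profiles n M)"
  unfolding profiles_def Vset_def by (intro finite_PiE) auto

lemma chi_vS: "M > 0 \<Longrightarrow> S \<subseteq> {..<n} \<Longrightarrow> chi n (vS n M S) = S"
  unfolding chi_def vS_def aa_def bb_def
  by (auto simp: not_less)

lemma vS_in: "vS n M S \<in> profiles n M"
  unfolding profiles_def vS_def Vset_def aa_def bb_def by (auto simp: PiE_def extensional_def)

lemma neM:
  assumes "(M::real) > 0" "M \<noteq> 1"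
  shows "M \<noteq> -(M^2)" "M \<noteq> -1" "(1::real) \<noteq> -(M^2)" "-1 \<noteq> -(M^2)" "M \<noteq> 1" "M^2 \<noteq> 1"
proof -
  have "M^2 \<ge> 0" by simp
  then show "M \<noteq> -(M^2)" "M \<noteq> -1" "(1::real) \<noteq> -(M^2)" "M \<noteq> 1" using assms by linarith+
  show "M^2 \<noteq> 1" "-1 \<noteq> -(M^2)" using assms by (auto simp: power2_eq_1_iff)
qed

lemma pval_vals:
  assumes "(M::real) > 0" "M \<noteq> 1"
  shows "pval M e i (-(M^2)) = (if i < 2 then 1/2 - e else e)"
    "pval M e i (-1) = (if i < 2 then e else 1/2 - e)"
    "pval M e i 1 = (if i < 2 then e else 1/2 - e)"
    "pval M e i M = (if i < 2 then 1/2 - e else e)"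
  using neM[OF assms] unfolding pval_def by auto

lemma prob0:
  assumes M: "M > 0" "M \<noteq> 1" and v: "v \<in> profiles n M"
  shows "(\<Prod>i<n. pval M 0 i (v i)) = (if v = vS n M (chi n v) then (1/2)^n else 0)"
proof (cases "v = vS n M (chi n v)")
  case True
  have "(\<Prod>i<n. pval M 0 i (v i)) = (\<Prod>i<n. 1/2)"
  proof (rule prod.cong)
    fix i assume i: "i \<in> {..<n}"
    have "v i = vS n M (chi n v) i" using True by metis
    also have "\<dots> = (if v i > 0 then aa M i else - bb M i)" using i by (simp add: vS_def chi_def)
    finally have "v i = (if v i > 0 then aa M i else - bb M i)" .
    then show "pval M 0 i (v i) = 1/2"
      by (cases "v i > 0"; cases "i < 2") (simp_all add: aa_def bb_def pval_vals[OF M])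
  qed simp
  then show ?thesis using True by simp
next
  case False
  note ne = neM[OF M]
  obtain i where i: "v i \<noteq> vS n M (chi n v) i"
    using False by blast
  have iin: "i < n"
  proof (rule ccontr)
    assume "\<not> i < n"
    then show False using i v unfolding profiles_def vS_def by (auto simp: PiE_def extensional_def)
  qed
  have vi: "v i \<in> {-(M^2), -1, 1, M}" using v iin unfolding profiles_def Vset_def by auto
  have vSi: "vS n M (chi n v) i = (if v i > 0 then aa M i else - bb M i)"
    using iin by (simp add: vS_def chi_def)
  have "pval M 0 i (v i) = 0"
  proof (cases "i < 2")
    case True
    then show ?thesis using vi i vSi M unfolding aa_def bb_def
      by (elim insertE) (simp_all add: pval_vals[OF M])
  next
    case False
    then show ?thesis using vi i vSi M unfolding aa_def bb_def
      by (elim insertE) (simp_all add: pval_vals[OF M])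
  qed
  then have "(\<Prod>i<n. pval M 0 i (v i)) = 0" using iin by (intro prod_zero) auto
  then show ?thesis using False by simp
qed

definition ck :: "nat \<Rightarrow> real \<Rightarrow> real \<Rightarrow> nat \<Rightarrow> real" where
  "ck n M e k = (\<Sum>v\<in>{v\<in>profiles n M. card (chi n v) = k}.
       (\<Prod>i<n. pval M e i (v i)) * (\<Sum>i<n. v i))"

lemma sum_aa: "n \<ge> 2 \<Longrightarrow> (\<Sum>i<n. aa M i) = 2 * M + (real n - 2)"
proof (induction n rule: dec_induct)
  case base
  then show ?case by (simp add: aa_def numeral_2_eq_2)
next
  case (step m)
  then show ?case by (simp add: aa_def)
qed

lemma sum_bb: "n \<ge> 2 \<Longrightarrow> (\<Sum>i<n. bb M i) = 2 * M^2 + (real n - 2)"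
proof (induction n rule: dec_induct)
  case base
  then show ?case by (simp add: bb_def numeral_2_eq_2)
next
  case (step m)
  then show ?case by (simp add: bb_def)
qed

lemma count_notin:
  assumes "i < n"
  shows "card {S. S \<subseteq> {..<n} \<and> card S = k \<and> i \<notin> S} = (n - 1) choose k"
proof -
  have "{S. S \<subseteq> {..<n} \<and> card S = k \<and> i \<notin> S} = {S. S \<subseteq> {..<n} - {i} \<and> card S = k}"
    by auto
  moreover have "card ({..<n} - {i}) = n - 1" using assms by simp
  ultimately show ?thesis using n_subsets[of "{..<n} - {i}" k] by simp
qed

lemma count_in:
  assumes "i < n"
  shows "real (card {S. S \<subseteq> {..<n} \<and> card S = k \<and> i \<in> S}) = real (n choose k) - real ((n - 1) choose k)"
proof -
  let ?K = "{S. S \<subseteq> {..<n} \<and> card S = k}"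
  have fin: "finite ?K" by (rule finite_subset[of _ "Pow {..<n}"]) auto
  have "?K = {S. S \<subseteq> {..<n} \<and> card S = k \<and> i \<in> S} \<union> {S. S \<subseteq> {..<n} \<and> card S = k \<and> i \<notin> S}"
    by auto
  then have "card ?K = card {S. S \<subseteq> {..<n} \<and> card S = k \<and> i \<in> S} + card {S. S \<subseteq> {..<n} \<and> card S = k \<and> i \<notin> S}"
    using fin by (metis (no_types, lifting) card_Un_disjoint disjoint_iff finite_Un mem_Collect_eq)
  moreover have "card ?K = n choose k" using n_subsets[of "{..<n}" k] by simp
  ultimately show ?thesis using count_notin[OF assms, of k] by simp
qed

lemma ck0:
  assumes M: "M > 0" "M \<noteq> 1" and n: "n \<ge> 2"
  shows "ck n M 0 k = (1/2)^n * ((real (n choose k) - real ((n-1) choose k)) * (2*M + (real n - 2))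
                        - real ((n-1) choose k) * (2*M^2 + (real n - 2)))"
proof -
  let ?C = "{v\<in>profiles n M. card (chi n v) = k}"
  let ?K = "{S. S \<subseteq> {..<n} \<and> card S = k}"
  have finK: "finite ?K" by (rule finite_subset[of _ "Pow {..<n}"]) auto
  have finC: "finite ?C" using finite_profiles by simp
  have "ck n M 0 k = (\<Sum>v\<in>?C. if v = vS n M (chi n v) then (1/2)^n * (\<Sum>i<n. v i) else 0)"
    unfolding ck_def by (rule sum.cong) (auto simp: prob0[OF M])
  also have "\<dots> = (\<Sum>v\<in>{v\<in>?C. v = vS n M (chi n v)}. (1/2)^n * (\<Sum>i<n. v i))"
    using finC by (rule sum.inter_filter[symmetric])
  also have "{v\<in>?C. v = vS n M (chi n v)} = vS n M ` ?K"
  proof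
    show "{v\<in>?C. v = vS n M (chi n v)} \<subseteq> vS n M ` ?K"
    proof
      fix v assume "v \<in> {v\<in>?C. v = vS n M (chi n v)}"
      then have v1: "v \<in> ?C" and v2: "v = vS n M (chi n v)" by blast+
      have "chi n v \<in> ?K" using v1 by (auto simp: chi_def)
      then show "v \<in> vS n M ` ?K" using v2 by (rule rev_image_eqI)
    qed
  next
    show "vS n M ` ?K \<subseteq> {v\<in>?C. v = vS n M (chi n v)}"
    proof
      fix v assume "v \<in> vS n M ` ?K"
      then obtain S where S: "S \<subseteq> {..<n}" "card S = k" "v = vS n M S" by blast
      have c: "chi n v = S" using chi_vS[OF M(1) S(1)] S(3) by simp
      have "v \<in> profiles n M" using  vS_in[of n M S] S(3) by simp
      then show "v \<in> {v\<in>?C. v = vS n M (chi n v)}"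
        using S c by simp
    qed
  qed
  also have "(\<Sum>v\<in>vS n M ` ?K. (1/2)^n * (\<Sum>i<n. v i)) = (\<Sum>S\<in>?K. (1/2)^n * (\<Sum>i<n. vS n M S i))"
  proof (rule sum.reindex_cong[where l = "vS n M"])
    show "inj_on (vS n M) ?K"
    proof (rule inj_onI)
      fix x y assume "x \<in> ?K" "y \<in> ?K" "vS n M x = vS n M y"
      then have "chi n (vS n M x) = chi n (vS n M y)" by (simp only:)
      then show "x = y" using chi_vS[OF M(1), of x n] chi_vS[OF M(1), of y n] \<open>x \<in> ?K\<close> \<open>y \<in> ?K\<close>
        by simp
    qed
  qed auto
  also have "\<dots> = (1/2)^n * (\<Sum>i<n. \<Sum>S\<in>?K. (if i \<in> S then aa M i else - bb M i))"
  proof -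
    have "(\<Sum>S\<in>?K. (1/2)^n * (\<Sum>i<n. vS n M S i)) = (1/2)^n * (\<Sum>S\<in>?K. \<Sum>i<n. (if i \<in> S then aa M i else - bb M i))"
    proof -
      have e: "(\<Sum>i<n. vS n M S i) = (\<Sum>i<n. (if i \<in> S then aa M i else - bb M i))" for S
        by (rule sum.cong) (auto simp: vS_def)
      show ?thesis by (simp only: e sum_distrib_left)
    qed
    also have "(\<Sum>S\<in>?K. \<Sum>i<n. (if i \<in> S then aa M i else - bb M i)) = (\<Sum>i<n. \<Sum>S\<in>?K. (if i \<in> S then aa M i else - bb M i))"
      by (rule sum.swap)
    finally show ?thesis .
  qed
  also have "(\<Sum>i<n. \<Sum>S\<in>?K. (if i \<in> S then aa M i else - bb M i))
     = (\<Sum>i<n. aa M i * (real (n choose k) - real ((n - 1) choose k)) - bb M i * real ((n - 1) choose k))"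
  proof (rule sum.cong)
    fix i assume i: "i \<in> {..<n}"
    have h1: "(\<Sum>S\<in>{S. S \<subseteq> {..<n} \<and> card S = k \<and> i \<in> S}. aa M i) = aa M i * (real (n choose k) - real ((n - 1) choose k))"
      using count_in[of i n k] i by simp
    have h2: "(\<Sum>S\<in>{S. S \<subseteq> {..<n} \<and> card S = k \<and> i \<notin> S}. - bb M i) = - (bb M i * real ((n - 1) choose k))"
      using count_notin[of i n k] i by simp
    have "(\<Sum>S\<in>?K. (if i \<in> S then aa M i else - bb M i)) =
       (\<Sum>S\<in>?K \<inter> {S. i \<in> S}. aa M i) + (\<Sum>S\<in>?K \<inter> - {S. i \<in> S}. - bb M i)"
      using finK by (rule sum.If_cases)
    also have "?K \<inter> {S. i \<in> S} = {S. S \<subseteq> {..<n} \<and> card S = k \<and> i \<in> S}" by auto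
    also have "?K \<inter> - {S. i \<in> S} = {S. S \<subseteq> {..<n} \<and> card S = k \<and> i \<notin> S}" by auto
    also note h1
    also note h2
    finally show "(\<Sum>S\<in>?K. (if i \<in> S then aa M i else - bb M i)) =
       aa M i * (real (n choose k) - real ((n - 1) choose k)) - bb M i * real ((n - 1) choose k)"
      by simp
  qed simp
  also have "\<dots> = (real (n choose k) - real ((n-1) choose k)) * (2*M + (real n - 2))
                        - real ((n-1) choose k) * (2*M^2 + (real n - 2))"
  proof -
    have "(\<Sum>i<n. aa M i * (real (n choose k) - real ((n - 1) choose k)) - bb M i * real ((n - 1) choose k))
      = (\<Sum>i<n. aa M i) * (real (n choose k) - real ((n - 1) choose k)) - (\<Sum>i<n. bb M i) * real ((n - 1) choose k)"
      by (simp only: sum_subtractf sum_distrib_right)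
    then show ?thesis by (simp only: sum_aa[OF n] sum_bb[OF n]) (simp add: mult.commute)
  qed
  finally show ?thesis .
qed

lemma condA_M:
  fixes n :: nat and M :: real
  assumes n: "n \<ge> 3" and M: "M > 0"
    and condA: "2 / real n * (-(M^2) + M + real n - 2)
                + (real n - 2) / real n * (2 * M + real n - 4) < 0"
  shows "(real n - 1) * (2*M + (real n - 2)) < 2*M^2 + (real n - 2)" and "M \<noteq> 1"
proof -
  have np: "real n > 0" using n by simp
  have "(2 * (-(M^2) + M + real n - 2) + (real n - 2) * (2 * M + real n - 4)) / real n < 0"
    using condA by (simp add: add_divide_distrib)
  then have h: "2 * (-(M^2) + M + real n - 2) + (real n - 2) * (2 * M + real n - 4) < 0"
    using np by (simp add: divide_less_0_iff)
  show "(real n - 1) * (2*M + (real n - 2)) < 2*M^2 + (real n - 2)"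
  proof -
    have "2*M^2 + (real n - 2) - (real n - 1) * (2*M + (real n - 2)) = -(2 * (-(M^2) + M + real n - 2) + (real n - 2) * (2 * M + real n - 4))"
      by algebra
    then show ?thesis using h by linarith
  qed
  show "M \<noteq> 1"
  proof
    assume "M = 1"
    then have "2 * (real n - 2) + (real n - 2) * (real n - 2) < 0" using h by simp
    moreover have "real n - 2 > 0" using n by simp
    ultimately show False
      by (metis add_pos_pos mult_pos_pos less_asym zero_less_numeral)
  qed
qed

lemma ck0_sign:
  fixes n :: nat and M :: real
  assumes n: "n \<ge> 3" and M: "M > 0"
    and condA: "2 / real n * (-(M^2) + M + real n - 2)
                + (real n - 2) / real n * (2 * M + real n - 4) < 0"
  shows "k < n \<Longrightarrow> ck n M 0 k < 0" and "ck n M 0 n > 0"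
proof -
  note cA = condA_M[OF n M condA]
  have n2: "n \<ge> 2" using n by simp
  let ?A = "2*M + (real n - 2)" and ?B = "2*M^2 + (real n - 2)"
  have Apos: "?A > 0" using M n by simp
  show "ck n M 0 n > 0"
  proof -
    have "(n - 1) choose n = 0" using n by (intro binomial_eq_0) simp
    then show ?thesis unfolding ck0[OF M cA(2) n2] using Apos by (simp del: binomial_eq_0_iff)
  qed
  assume k: "k < n"
  have key: "(real (n choose k) - real ((n-1) choose k)) * ?A < real ((n-1) choose k) * ?B"
  proof (cases k)
    case 0
    have "M^2 \<ge> 0" by simp
    then have "2*M^2 + (real n - 2) > 0" using n by linarith
    then show ?thesis using 0 by simp
  next
    case (Suc j)
    obtain m where m: "n = Suc m" using n by (cases n) auto
    have jm: "j < m" using k Suc m by simp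
    have pas: "real (n choose k) - real ((n-1) choose k) = real (m choose j)"
      using m Suc by simp
    have id: "(m - j) * (m choose j) = (m choose Suc j) * Suc j"
    proof -
      have m1: "Suc (m-1) = m" using jm by simp
      have "Suc j * (m choose Suc j) = m * ((m-1) choose j)"
        using Suc_times_binomial[of j "m-1"] m1 by simp
      then show ?thesis using binomial_absorb_comp[of m j] by (simp add: mult.commute)
    qed
    have "m choose j \<le> (m - j) * (m choose j)" using jm by simp
    also have "\<dots> = (m choose Suc j) * Suc j" by (rule id)
    also have "\<dots> \<le> (m choose Suc j) * m" using jm by (intro mult_le_mono2) simp
    finally have le: "real (m choose j) \<le> real (m choose Suc j) * real m" by (simp only: of_nat_le_iff of_nat_mult[symmetric])
    have cpos: "real (m choose Suc j) > 0" using jm by simp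
    have "real (m choose j) * ?A \<le> real (m choose Suc j) * real m * ?A"
      using le Apos by (simp add: mult_right_mono)
    also have "\<dots> < real (m choose Suc j) * ?B"
      using cA(1) cpos m by (simp add: mult.assoc)
    finally show ?thesis using pas m Suc by simp
  qed
  show "ck n M 0 k < 0"
    unfolding ck0[OF M cA(2) n2] using key by (intro mult_pos_neg) auto
qed

lemma pval_lin: "pval M e i x = pval M 0 i x + e * (pval M 1 i x - pval M 0 i x)"
  unfolding pval_def by auto

lemma ck_tendsto: "((\<lambda>e. ck n M e k) \<longlongrightarrow> ck n M 0 k) (at_right 0)"
proof -
  have "isCont (\<lambda>e. ck n M e k) 0"
    unfolding ck_def by (subst pval_lin) (intro continuous_intros)
  then have "((\<lambda>e. ck n M e k) \<longlongrightarrow> ck n M 0 k) (at 0)" by (simp add: isCont_def)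
  then show ?thesis by (rule tendsto_within_subset) simp
qed

lemma welfare_group:
  "welfare n M e g = (\<Sum>k\<in>{..n}. \<Sum>v\<in>{v\<in>profiles n M. card (chi n v) = k}.
       (\<Prod>i<n. pval M e i (v i)) * (g v * (\<Sum>i<n. v i)))"
proof -
  have "(\<lambda>v. card (chi n v)) ` profiles n M \<subseteq> {..n}"
  proof
    fix x assume "x \<in> (\<lambda>v. card (chi n v)) ` profiles n M"
    then obtain v where "x = card (chi n v)" by blast
    moreover have "chi n v \<subseteq> {..<n}" by (auto simp: chi_def)
    ultimately show "x \<in> {..n}" using card_mono[of "{..<n}" "chi n v"] by simp
  qed
  then show ?thesis unfolding welfare_def
    by (rule sum.group[OF finite_profiles finite_atMost, symmetric])
qed

lemma class_le:
  assumes scf: "is_scf n M f" and ord: "ordinal n M f" and an: "anonymous n M f"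
    and neg: "k < n \<Longrightarrow> ck n M e k \<le> 0" and pos: "k = n \<Longrightarrow> ck n M e k \<ge> 0"
  shows "(\<Sum>v\<in>{v\<in>profiles n M. card (chi n v) = k}. (\<Prod>i<n. pval M e i (v i)) * (f v * (\<Sum>i<n. v i)))
    \<le> (\<Sum>v\<in>{v\<in>profiles n M. card (chi n v) = k}. (\<Prod>i<n. pval M e i (v i)) * (unanimity n v * (\<Sum>i<n. v i)))"
proof (cases "{v\<in>profiles n M. card (chi n v) = k} = {}")
  case True
  show ?thesis unfolding True by simp
next
  case False
  let ?C = "{v\<in>profiles n M. card (chi n v) = k}"
  obtain w where w: "w \<in> ?C" using False by blast
  have fv: "f v = f w" if "v \<in> ?C" for v
    using class_const[OF ord an, of v w] that w by simp
  have uv: "unanimity n v = (if k = n then 1 else 0)" if "v \<in> ?C" for v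
    using that by (simp add: unanimity_def)
  have L: "(\<Sum>v\<in>?C. (\<Prod>i<n. pval M e i (v i)) * (f v * (\<Sum>i<n. v i))) = f w * ck n M e k"
  proof -
    have "(\<Sum>v\<in>?C. (\<Prod>i<n. pval M e i (v i)) * (f v * (\<Sum>i<n. v i))) = (\<Sum>v\<in>?C. f w * ((\<Prod>i<n. pval M e i (v i)) * (\<Sum>i<n. v i)))"
      by (rule sum.cong) (simp_all add: fv mult.left_commute)
    also have "\<dots> = f w * ck n M e k" unfolding ck_def by (rule sum_distrib_left[symmetric])
    finally show ?thesis .
  qed
  have R: "(\<Sum>v\<in>?C. (\<Prod>i<n. pval M e i (v i)) * (unanimity n v * (\<Sum>i<n. v i))) = (if k = n then 1 else 0) * ck n M e k"
  proof -
    have "(\<Sum>v\<in>?C. (\<Prod>i<n. pval M e i (v i)) * (unanimity n v * (\<Sum>i<n. v i))) = (\<Sum>v\<in>?C. (if k = n then 1 else 0) * ((\<Prod>i<n. pval M e i (v i)) * (\<Sum>i<n. v i)))"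
      by (rule sum.cong) (simp_all add: uv mult.left_commute)
    also have "\<dots> = (if k = n then 1 else 0) * ck n M e k" unfolding ck_def by (rule sum_distrib_left[symmetric])
    finally show ?thesis .
  qed
  have f01: "0 \<le> f w" "f w \<le> 1" using scf w unfolding is_scf_def by auto
  show ?thesis
  proof (cases "k = n")
    case True
    then have "ck n M e k \<ge> 0" using pos by simp
    then have "f w * ck n M e k \<le> 1 * ck n M e k" using f01 by (intro mult_right_mono) auto
    then show ?thesis unfolding L R using True by simp
  next
    case False
    have "k < n"
    proof -
      have "chi n w \<subseteq> {..<n}" by (auto simp: chi_def)
      then have "k \<le> n" using w card_mono[of "{..<n}" "chi n w"] by simp
      then show ?thesis using False by simp
    qed
    then have "ck n M e k \<le> 0" using neg by simp
    then have "f w * ck n M e k \<le> 0" using f01 by (simp add: mult_nonneg_nonpos)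
    then show ?thesis unfolding L R using False by simp
  qed
qed

theorem lemma4:
  fixes n :: nat and M :: real
  assumes "n \<ge> 3" and "M > 0"
    and condA: "2 / real n * (-(M^2) + M + real n - 2)
                + (real n - 2) / real n * (2 * M + real n - 4) < 0"
    and condB: "2 * M - (real n - 2) > 0"
  shows "\<exists>eps0 > 0. \<forall>eps. 0 < eps \<and> eps < eps0 \<longrightarrow>
           (\<forall>f. is_scf n M f \<and> ordinal n M f \<and> anonymous n M f \<longrightarrow>
                welfare n M eps f \<le> welfare n M eps (unanimity n))"
proof -
  note sg = ck0_sign[OF assms(1) assms(2) condA]
  have ev1: "eventually (\<lambda>e. \<forall>k\<in>{..<n}. ck n M e k < 0) (at_right 0)"
    using sg(1) by (intro eventually_ball_finite ballI order_tendstoD(2)[OF ck_tendsto]) auto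
  have ev2: "eventually (\<lambda>e. ck n M e n > 0) (at_right 0)"
    using sg(2) by (intro order_tendstoD(1)[OF ck_tendsto]) auto
  have "eventually (\<lambda>e. (\<forall>k\<in>{..<n}. ck n M e k < 0) \<and> ck n M e n > 0) (at_right (0::real))"
    using ev1 ev2 by (rule eventually_conj)
  then obtain b :: real where b: "b > 0" and hb: "\<And>e. e > 0 \<Longrightarrow> e < b \<Longrightarrow> (\<forall>k\<in>{..<n}. ck n M e k < 0) \<and> ck n M e n > 0"
    unfolding eventually_at_right_field by blast
  show ?thesis
  proof (intro exI[of _ b] conjI allI impI)
    fix e f assume e: "0 < e \<and> e < b" and f: "is_scf n M f \<and> ordinal n M f \<and> anonymous n M f"
    have he: "\<forall>k\<in>{..<n}. ck n M e k < 0" "ck n M e n > 0" using hb e by auto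
    show "welfare n M e f \<le> welfare n M e (unanimity n)"
      unfolding welfare_group
    proof (rule sum_mono)
      fix k assume "k \<in> {..n}"
      show "(\<Sum>v\<in>{v\<in>profiles n M. card (chi n v) = k}. (\<Prod>i<n. pval M e i (v i)) * (f v * (\<Sum>i<n. v i)))
    \<le> (\<Sum>v\<in>{v\<in>profiles n M. card (chi n v) = k}. (\<Prod>i<n. pval M e i (v i)) * (unanimity n v * (\<Sum>i<n. v i)))"
        using f he by (intro class_le) (auto simp: less_imp_le)
    qed
  qed (rule b)
qed

end
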